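(* Consider the Data Revocation Game with homogeneous dependent users: all users have the same parameters $\theta>0$, $\ell>0$, $\xi>0$, $d^{\max}>0$, and independence index $\epsilon_i=0$ for all $i$ (with the convention $\ln 0=-\infty$). Then: (1) If $d^{\max}>\frac{1}{I\xi\ell}$, the symmetric profile with, for all $i\in\mathcal I$, $$d_i^*=\frac{1}{2\theta\ell(I-1)}\Big(d^{\max}(\xi+\theta\ell(I-1))-\sqrt{(d^{\max})^2(\xi+\theta\ell(I-1))^2-4\theta(I-1)d^{\max}/I}\Big)$$ satisfies $d_i^*\in(0,d^{\max})$ and is a Nash equilibrium. (2) If $d^{\max}\le\frac{1}{I\xi\ell}$, the profile $d_i^*=d^{\max}$ for all $i\in\mathcal I$ is a Nash equilibrium.
   Context: Data Revocation Game: a finite set of users $\mathcal I=\{1,\dots,I\}$, $I\ge 2$. Each user $i$ has parameters $d_i^{\max}>0$, $\epsilon_i\ge 0$ (independence index), $\xi_i>0$ (marginal privacy cost), $\ell_i>0$ (data uniqueness level), $\theta_i\ge 0$ (marginal unlearning cost). Each user chooses $d_i\in[0,d_i^{\max}]$ (data kept). Payoff $$U_i(d_i,\boldsymbol{d_{-i}})=\ln\Big(\sum_{j\in\mathcal I}d_j+\epsilon_i\Big)-\xi_i d_i\ell_i-\theta_i d_i\sum_{j\neq i}\Big(1-\frac{d_j}{d_j^{\max}}\Big)\ell_j^2 .$$ A Nash equilibrium is a profile $(d_i^* )$ with $d_i^*\in[0,d_i^{\max}]$ and $U_i(d_i^*,\boldsymbol{d_{-i}^*})\ge U_i(d_i,\boldsymbol{d_{-i}^*})$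 for all $i$ and all $d_i\in[0,d_i^{\max}]$. *)

theory Defs
  imports Complex_Main "HOL-Library.Extended_Real"
begin

definition ln_ext :: "real \<Rightarrow> ereal" where
  "ln_ext x = (if x > 0 then ereal (ln x) else -\<infinity>)"

definition drg_payoff ::
  "nat \<Rightarrow> (nat \<Rightarrow> real) \<Rightarrow> (nat \<Rightarrow> real) \<Rightarrow> (nat \<Rightarrow> real) \<Rightarrow> (nat \<Rightarrow> real)
   \<Rightarrow> (nat \<Rightarrow> real) \<Rightarrow> nat \<Rightarrow> (nat \<Rightarrow> real) \<Rightarrow> ereal" where
  "drg_payoff I dmax eps xi ell theta i d =
     ln_ext ((\<Sum>j\<in>{1..I}. d j) + eps i)
     - ereal (xi i * d i * ell i
              + theta i * d i * (\<Sum>j\<in>{1..I} - {i}. (1 - d j / dmax j) * (ell j)\<^sup>2))"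

definition drg_nash ::
  "nat \<Rightarrow> (nat \<Rightarrow> real) \<Rightarrow> (nat \<Rightarrow> real) \<Rightarrow> (nat \<Rightarrow> real) \<Rightarrow> (nat \<Rightarrow> real)
   \<Rightarrow> (nat \<Rightarrow> real) \<Rightarrow> (nat \<Rightarrow> real) \<Rightarrow> bool" where
  "drg_nash I dmax eps xi ell theta d \<longleftrightarrow>
     (\<forall>i\<in>{1..I}. 0 \<le> d i \<and> d i \<le> dmax i) \<and>
     (\<forall>i\<in>{1..I}. \<forall>x. 0 \<le> x \<and> x \<le> dmax i \<longrightarrow>
        drg_payoff I dmax eps xi ell theta i (d(i := x))
          \<le> drg_payoff I dmax eps xi ell theta i d)"

end

theory Submission
  imports Defs
begin

lemma card_rm: "i \<in> {1..I} \<Longrightarrow> real (card ({1..I} - {i})) = real I - 1"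
  by (simp add: of_nat_diff)

lemma payoff_const:
  fixes I :: nat and th l xi dm D x :: real
  assumes i: "i \<in> {1..I}" and pos: "x + (real I - 1) * D > 0"
  shows "drg_payoff I (\<lambda>_. dm) (\<lambda>_. 0) (\<lambda>_. xi) (\<lambda>_. l) (\<lambda>_. th) i ((\<lambda>_. D)(i := x))
     = ereal (ln (x + (real I - 1) * D) - (xi * x * l + th * x * ((real I - 1) * ((1 - D / dm) * l\<^sup>2))))"
proof -
  have fin: "finite {1..I}" by simp
  have s1: "(\<Sum>j\<in>{1..I}. ((\<lambda>_. D)(i := x)) j) = x + (real I - 1) * D"
  proof -
    have "(\<Sum>j\<in>{1..I}. ((\<lambda>_. D)(i := x)) j) = ((\<lambda>_. D)(i := x)) i + (\<Sum>j\<in>{1..I}-{i}. ((\<lambda>_. D)(i := x)) j)"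
      using sum.remove[OF fin i] by blast
    also have "(\<Sum>j\<in>{1..I}-{i}. ((\<lambda>_. D)(i := x)) j) = (\<Sum>j\<in>{1..I}-{i}. D)"
      by (rule sum.cong) auto
    finally show ?thesis using card_rm[OF i] by simp
  qed
  have s2: "(\<Sum>j\<in>{1..I}-{i}. (1 - ((\<lambda>_. D)(i := x)) j / dm) * l\<^sup>2) = (real I - 1) * ((1 - D / dm) * l\<^sup>2)"
  proof -
    have "(\<Sum>j\<in>{1..I}-{i}. (1 - ((\<lambda>_. D)(i := x)) j / dm) * l\<^sup>2) = (\<Sum>j\<in>{1..I}-{i}. (1 - D / dm) * l\<^sup>2)"
      by (rule sum.cong) auto
    then show ?thesis using card_rm[OF i] by simp
  qed
  show ?thesis unfolding drg_payoff_def ln_ext_def using s1 s2 pos by simp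
qed

lemma ln_tangent: fixes y z :: real shows "y > 0 \<Longrightarrow> z > 0 \<Longrightarrow> ln y - ln z \<le> (y - z) / z"
proof -
  assume y: "y > 0" and z: "z > 0"
  have "ln (y / z) \<le> y / z - 1" using ln_le_minus_one[of "y/z"] y z by simp
  moreover have "ln (y/z) = ln y - ln z" using y z by (simp add: ln_div)
  moreover have "y / z - 1 = (y - z) / z" using z by (simp add: field_simps)
  ultimately show ?thesis by simp
qed

theorem proposition1:
  fixes I :: nat and th l xi dm :: real
  assumes "I \<ge> 2" and "th > 0" and "l > 0" and "xi > 0" and "dm > 0"
  shows "(dm > 1 / (real I * xi * l) \<longrightarrow>
           (let D = 1 / (2 * th * l * (real I - 1)) *
                    (dm * (xi + th * l * (real I - 1))
                     - sqrt (dm\<^sup>2 * (xi + th * l * (real I - 1))\<^sup>2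
                             - 4 * th * (real I - 1) * dm / real I))
            in 0 < D \<and> D < dm \<and>
               drg_nash I (\<lambda>_. dm) (\<lambda>_. 0) (\<lambda>_. xi) (\<lambda>_. l) (\<lambda>_. th) (\<lambda>_. D)))
       \<and> (dm \<le> 1 / (real I * xi * l) \<longrightarrow>
           drg_nash I (\<lambda>_. dm) (\<lambda>_. 0) (\<lambda>_. xi) (\<lambda>_. l) (\<lambda>_. th) (\<lambda>_. dm))"
proof (intro conjI impI)
  have I1: "real I - 1 \<ge> 1" using assms(1) by simp
  have Ip: "real I > 0" using assms(1) by simp
  {
    assume big: "dm > 1 / (real I * xi * l)"
    define b where "b = th * l * (real I - 1)"
    have bp: "b > 0" unfolding b_def using assms I1 by simp
    define Q where "Q = dm\<^sup>2 * (xi + b)\<^sup>2 - 4 * th * (real I - 1) * dm / real I"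
    define D where "D = 1 / (2 * b) * (dm * (xi + b) - sqrt Q)"
    have big': "1 / (real I * l) < dm * xi" using big assms Ip
      by (simp add: field_simps)
    have Qeq: "Q = dm\<^sup>2 * (xi + b)\<^sup>2 - 4 * b * dm * (1 / (real I * l))"
      unfolding Q_def b_def using assms Ip by (simp add: field_simps)
    have "4 * b * dm * (1 / (real I * l)) < 4 * b * dm * (dm * xi)"
      using big' bp assms by (intro mult_strict_left_mono) auto
    also have "\<dots> \<le> dm\<^sup>2 * (xi + b)\<^sup>2"
    proof -
      have "0 \<le> dm\<^sup>2 * (xi - b)\<^sup>2" by simp
      thus ?thesis by (simp add: power2_eq_square algebra_simps)
    qed
    finally have Qpos: "Q > 0" unfolding Qeq by simp
    have sqQ: "sqrt Q ^ 2 = Q" using Qpos by (simp add: less_imp_le)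
    have sQp: "sqrt Q \<ge> 0" using Qpos by simp
    have quad: "b * D\<^sup>2 - dm * (xi + b) * D + dm / (real I * l) = 0"
    proof -
      have "4 * b * (b * D\<^sup>2 - dm * (xi + b) * D + dm / (real I * l))
          = (2*b*D - dm*(xi+b))^2 - dm\<^sup>2 * (xi + b)\<^sup>2 + 4 * b * dm / (real I * l)"
        by (simp add: power2_eq_square algebra_simps)
      also have "2*b*D - dm*(xi+b) = - sqrt Q" unfolding D_def using bp by (simp add: field_simps)
      also have "(- sqrt Q)^2 - dm\<^sup>2 * (xi + b)\<^sup>2 + 4 * b * dm / (real I * l) = 0"
        using sqQ Qeq by simp
      finally show ?thesis using bp by simp
    qed
    have Dlt: "D < dm"
    proof -
      have key: "sqrt Q > dm*(xi+b) - 2*b*dm"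
      proof (cases "dm*(xi+b) - 2*b*dm \<le> 0")
        case True thus ?thesis using Qpos real_sqrt_gt_zero[of Q] by linarith
      next
        case False
        have df: "Q - (dm*(xi+b) - 2*b*dm)^2 = 4 * b * dm * (dm * xi - 1 / (real I * l))"
          unfolding Qeq by (simp add: power2_eq_square algebra_simps)
        have "4 * b * dm * (dm * xi - 1 / (real I * l)) > 0"
          using big' bp assms by simp
        hence "(dm*(xi+b) - 2*b*dm)^2 < Q" using df by linarith
        hence "(dm*(xi+b) - 2*b*dm)^2 < (sqrt Q)^2" using sqQ by simp
        thus ?thesis using sQp by (meson power_less_imp_less_base)
      qed
      show ?thesis unfolding D_def using key bp by (simp add: field_simps)
    qed
    have Dpos: "D > 0"
    proof -
      have "sqrt Q < dm * (xi + b)"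
      proof -
        have "Q < (dm * (xi + b))^2" unfolding Qeq using bp assms Ip
          by (simp add: power_mult_distrib)
        hence "(sqrt Q)^2 < (dm * (xi + b))^2" using sqQ by simp
        thus ?thesis using assms bp by (meson power_less_imp_less_base mult_pos_pos add_pos_pos less_imp_le)
      qed
      thus ?thesis unfolding D_def using bp by (simp add: field_simps)
    qed
    \<comment> \<open>first-order condition\<close>
    have foc: "1 / (real I * D) = xi * l + th * ((real I - 1) * ((1 - D / dm) * l\<^sup>2))"
    proof -
      have "real I * l * dm * D * (xi * l + th * ((real I - 1) * ((1 - D / dm) * l\<^sup>2)))
          = l * l * real I * (dm * (xi + b) * D - b * D\<^sup>2)"
        unfolding b_def using assms by (simp add: field_simps power2_eq_square)
      also have "dm * (xi + b) * D - b * D\<^sup>2 = dm / (real I * l)" using quad by simp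
      finally have "real I * l * dm * D * (xi * l + th * ((real I - 1) * ((1 - D / dm) * l\<^sup>2))) = l * dm"
        using assms Ip by (simp add: field_simps)
      hence "(real I * D) * (xi * l + th * ((real I - 1) * ((1 - D / dm) * l\<^sup>2))) * (l * dm) = 1 * (l * dm)"
        by (simp add: algebra_simps)
      hence "(real I * D) * (xi * l + th * ((real I - 1) * ((1 - D / dm) * l\<^sup>2))) = 1"
        using assms by (metis mult_right_cancel mult_pos_pos less_irrefl)
      thus ?thesis using Ip Dpos by (simp add: field_simps)
    qed
    have nash: "drg_nash I (\<lambda>_. dm) (\<lambda>_. 0) (\<lambda>_. xi) (\<lambda>_. l) (\<lambda>_. th) (\<lambda>_. D)"
      unfolding drg_nash_def
    proof (intro conjI ballI allI impI)
      fix i assume "i \<in> {1..I}" thus "0 \<le> D" "D \<le> dm" using Dpos Dlt by auto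
    next
      fix i x assume i: "i \<in> {1..I}" and x: "0 \<le> x \<and> x \<le> dm"
      have p1: "x + (real I - 1) * D > 0" using x Dpos I1 by (simp add: add_nonneg_pos)
      have p2: "D + (real I - 1) * D > 0" using Dpos I1 mult_nonneg_nonneg[of "real I - 1" D] by linarith
      have e: "(\<lambda>_. D)(i := D) = (\<lambda>_. D)" by auto
      define c where "c = xi * l + th * ((real I - 1) * ((1 - D / dm) * l\<^sup>2))"
      have DI: "D + (real I - 1) * D = real I * D" by (simp add: algebra_simps)
      have "ln (x + (real I - 1) * D) - ln (D + (real I - 1) * D)
            \<le> (x - D) / (real I * D)"
      proof -
        have eq: "x + (real I - 1) * D - real I * D = x - D" by (simp add: algebra_simps)
        show ?thesis using ln_tangent[OF p1 p2] unfolding DI eq .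
      qed
      also have "\<dots> = (1 / (real I * D)) * (x - D)" by simp
      also have "\<dots> = c * (x - D)" unfolding foc c_def ..
      finally have fin1: "ln (x + (real I - 1) * D) - ln (D + (real I - 1) * D) \<le> c * (x - D)" .
      have e1: "xi * x * l + th * x * ((real I - 1) * ((1 - D / dm) * l\<^sup>2)) = c * x"
        unfolding c_def by (simp add: algebra_simps)
      have e2: "xi * D * l + th * D * ((real I - 1) * ((1 - D / dm) * l\<^sup>2)) = c * D"
        unfolding c_def by (simp add: algebra_simps)
      have e3: "c * (x - D) = c * x - c * D" by (simp add: algebra_simps)
      have "ln (x + (real I - 1) * D) - (xi * x * l + th * x * ((real I - 1) * ((1 - D / dm) * l\<^sup>2)))
          \<le> ln (D + (real I - 1) * D) - (xi * D * l + th * D * ((real I - 1) * ((1 - D / dm) * l\<^sup>2)))"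
        unfolding e1 e2 using fin1 e3 by linarith
      thus "drg_payoff I (\<lambda>_. dm) (\<lambda>_. 0) (\<lambda>_. xi) (\<lambda>_. l) (\<lambda>_. th) i ((\<lambda>_. D)(i := x))
          \<le> drg_payoff I (\<lambda>_. dm) (\<lambda>_. 0) (\<lambda>_. xi) (\<lambda>_. l) (\<lambda>_. th) i (\<lambda>_. D)"
        using payoff_const[OF i p1, of dm xi l th] payoff_const[OF i p2, of dm xi l th] e by simp
    qed
    show "let D = 1 / (2 * th * l * (real I - 1)) *
                    (dm * (xi + th * l * (real I - 1))
                     - sqrt (dm\<^sup>2 * (xi + th * l * (real I - 1))\<^sup>2
                             - 4 * th * (real I - 1) * dm / real I))
            in 0 < D \<and> D < dm \<and>
               drg_nash I (\<lambda>_. dm) (\<lambda>_. 0) (\<lambda>_. xi) (\<lambda>_. l) (\<lambda>_. th) (\<lambda>_. D)"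
    proof -
      have Deq: "1 / (2 * th * l * (real I - 1)) *
                    (dm * (xi + th * l * (real I - 1))
                     - sqrt (dm\<^sup>2 * (xi + th * l * (real I - 1))\<^sup>2
                             - 4 * th * (real I - 1) * dm / real I)) = D"
        unfolding D_def Q_def b_def by (simp add: mult.assoc)
      show ?thesis unfolding Let_def Deq using Dpos Dlt nash by blast
    qed
  }
  {
    assume small: "dm \<le> 1 / (real I * xi * l)"
    have sm: "xi * l \<le> 1 / (real I * dm)" using small assms Ip by (simp add: field_simps)
    show "drg_nash I (\<lambda>_. dm) (\<lambda>_. 0) (\<lambda>_. xi) (\<lambda>_. l) (\<lambda>_. th) (\<lambda>_. dm)"
      unfolding drg_nash_def
    proof (intro conjI ballI allI impI)
      fix i assume "i \<in> {1..I}" thus "0 \<le> dm" "dm \<le> dm" using assms by auto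
    next
      fix i x assume i: "i \<in> {1..I}" and x: "0 \<le> x \<and> x \<le> dm"
      have p1: "x + (real I - 1) * dm > 0" using x assms I1 by (simp add: add_nonneg_pos)
      have p2: "dm + (real I - 1) * dm > 0" using assms I1 mult_nonneg_nonneg[of "real I - 1" dm] by linarith
      have e: "(\<lambda>_. dm)(i := dm) = (\<lambda>_. dm)" by auto
      have DI: "dm + (real I - 1) * dm = real I * dm" by (simp add: algebra_simps)
      have "ln (dm + (real I - 1) * dm) - ln (x + (real I - 1) * dm)
            \<ge> (dm - x) / (real I * dm)"
      proof -
        have eq: "x + (real I - 1) * dm - real I * dm = -(dm - x)" by (simp add: algebra_simps)
        have "ln (x + (real I - 1) * dm) - ln (dm + (real I - 1) * dm) \<le> -(dm - x) / (real I * dm)"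
          using ln_tangent[OF p1 p2] unfolding DI eq .
        moreover have "-(dm - x) / (real I * dm) = -((dm - x) / (real I * dm))" by (simp add: minus_divide_left)
        ultimately show ?thesis using DI by linarith
      qed
      moreover have "(dm - x) / (real I * dm) \<ge> xi * l * (dm - x)"
      proof -
        have "xi * l * (dm - x) \<le> 1 / (real I * dm) * (dm - x)"
          using sm x by (intro mult_right_mono) auto
        thus ?thesis by simp
      qed
      ultimately have "ln (x + (real I - 1) * dm) - (xi * x * l + th * x * ((real I - 1) * ((1 - dm / dm) * l\<^sup>2)))
          \<le> ln (dm + (real I - 1) * dm) - (xi * dm * l + th * dm * ((real I - 1) * ((1 - dm / dm) * l\<^sup>2)))"
        using assms by (simp add: algebra_simps)
      thus "drg_payoff I (\<lambda>_. dm) (\<lambda>_. 0) (\<lambda>_. xi) (\<lambda>_. l) (\<lambda>_. th) i ((\<lambda>_. dm)(i := x))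
          \<le> drg_payoff I (\<lambda>_. dm) (\<lambda>_. 0) (\<lambda>_. xi) (\<lambda>_. l) (\<lambda>_. th) i (\<lambda>_. dm)"
        using payoff_const[OF i p1, of dm xi l th] payoff_const[OF i p2, of dm xi l th] e by simp
    qed
  }
qed

end
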